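(* Let $f(x)=1+x\in\mathbb F_2[x]$. For an integer $r\ge1$ let $B=\{(i,j)\in\mathbb Z^2:0\le i\le j\le r-1\}$, and for $p\in(0,1)$ let $B^*\subseteq B$ be a random subset containing each site of $B$ independently with probability $p$. Let $F_r=\mathrm{span}_{\mathbb F_2}\{x^i f(x)^{\,r-1-j}:(i,j)\in B^*\}$, a subspace of the $r$-dimensional space of polynomials in $\mathbb F_2[x]$ of degree at most $r-1$, and let $d_r=\dim F_r$. Then for every $p\in(0,1)$ and every $\kappa>0$ there exist constants $c>0$ and $C>0$ such that for all $L\ge2$, with $r=\lceil \tfrac{c}{p^{3}}\log L\rceil$, $$1-\mathrm{Prob}[d_r=r]\le C\,L^{-\kappa}.$$ (In particular the exponent can be taken larger than $3$.)
   Context: Here $x^i f^{r-1-j}$ for a site $(i,j)$ represents, in the polynomial representation of the cubic-lattice fractal code, the pattern of excitations on the bottom row of $B$ that can be absorbed by a removed stabilizer term at $(i,j)$; $d_r=r$ means every polynomial of degree at most $r-1$ lies in $F_r$. *)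

theory Defs
  imports Complex_Main "HOL-Library.Z2" "HOL-Computational_Algebra.Polynomial"
begin

definition fpoly :: "bit poly" where
  "fpoly = [:1, 1:]"

definition siteB :: "nat \<Rightarrow> (nat \<times> nat) set" where
  "siteB r = {(i, j). i \<le> j \<and> j \<le> r - 1}"

definition Fspace :: "nat \<Rightarrow> (nat \<times> nat) set \<Rightarrow> bit poly set" where
  "Fspace r S = module.span (smult :: bit \<Rightarrow> bit poly \<Rightarrow> bit poly)
      ((\<lambda>(i, j). monom 1 i * fpoly ^ (r - 1 - j)) ` S)"

definition dr :: "nat \<Rightarrow> (nat \<times> nat) set \<Rightarrow> nat" where
  "dr r S = vector_space.dim (smult :: bit \<Rightarrow> bit poly \<Rightarrow> bit poly) (Fspace r S)"

definition probB :: "real \<Rightarrow> nat \<Rightarrow> ((nat \<times> nat) set \<Rightarrow> bool) \<Rightarrow> real" where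
  "probB p r E = (\<Sum>S\<in>Pow (siteB r).
      (if E S then p ^ card S * (1 - p) ^ (card (siteB r) - card S) else 0))"

end

theory Submission
  imports Defs
begin
interpretation PV: vector_space "smult :: bit \<Rightarrow> bit poly \<Rightarrow> bit poly"
  by unfold_locales (simp_all only: smult_add_right smult_add_left smult_smult smult_1_left)
interpretation BV: vector_space "(*) :: bit \<Rightarrow> bit \<Rightarrow> bit"
  by unfold_locales (auto simp: algebra_simps bit_2_eq_0)
interpretation PB: vector_space_pair "smult :: bit \<Rightarrow> bit poly \<Rightarrow> bit poly" "(*) :: bit \<Rightarrow> bit \<Rightarrow> bit"
  by unfold_locales

definition Vr :: "nat \<Rightarrow> bit poly set" where "Vr r = {g. \<forall>i\<ge>r. coeff g i = 0}"

lemma subspace_Vr: "PV.subspace (Vr r)"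
  unfolding PV.subspace_def Vr_def by (auto simp: coeff_smult)

lemma poly_sum_lt: "g \<in> Vr r \<Longrightarrow> g = (\<Sum>i<r. smult (coeff g i) (monom 1 i))"
  unfolding Vr_def by (auto simp: poly_eq_iff coeff_sum smult_monom not_less)

lemma span_monoms: "PV.span (monom 1 ` {..<r}) = Vr r"
proof (rule PV.span_subspace)
  show "monom 1 ` {..<r} \<subseteq> Vr r" by (auto simp: Vr_def)
  show "Vr r \<subseteq> PV.span (monom 1 ` {..<r})"
  proof
    fix g assume g: "g \<in> Vr r"
    have "(\<Sum>i<r. smult (coeff g i) (monom 1 i)) \<in> PV.span (monom 1 ` {..<r})"
      by (intro PV.span_sum PV.span_scale PV.span_base) auto
    then show "g \<in> PV.span (monom 1 ` {..<r})" using poly_sum_lt[OF g] by simp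
  qed
  show "PV.subspace (Vr r)" by (rule subspace_Vr)
qed

lemma indep_monoms: "PV.independent (monom 1 ` {..<(r::nat)} :: bit poly set)"
  unfolding PV.independent_explicit_module
proof (intro allI impI)
  fix t u v
  assume t: "finite t" "t \<subseteq> monom 1 ` {..<r}" and s: "(\<Sum>v\<in>t. smult (u v) v) = (0::bit poly)" and v: "v \<in> t"
  from t v obtain m where vm: "v = monom 1 m" by auto
  have "coeff (\<Sum>v\<in>t. smult (u v) v) m = (\<Sum>w\<in>t. u w * coeff w m)"
    by (simp add: coeff_sum)
  also have "\<dots> = (\<Sum>w\<in>t. if w = v then u w else 0)"
  proof (rule sum.cong[OF refl])
    fix w assume "w \<in> t" then obtain i where "w = monom 1 i" using t by auto
    then show "u w * coeff w m = (if w = v then u w else 0)" using vm by (auto simp: monom_eq_iff')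
  qed
  also have "\<dots> = u v" using t v by simp
  finally show "u v = 0" using s by simp
qed

lemma dim_Vr: "PV.dim (Vr r) = r"
proof -
  have "PV.dim (Vr r) = PV.dim (PV.span (monom 1 ` {..<r}))" by (simp add: span_monoms)
  also have "\<dots> = card (monom 1 ` {..<r} :: bit poly set)" by (rule PV.dim_span_eq_card_independent[OF indep_monoms])
  also have "\<dots> = r" by (subst card_image) (auto simp: inj_on_def monom_eq_iff')
  finally show ?thesis .
qed

lemma dual:
  fixes G :: "bit poly set"
  assumes "PV.span G \<subseteq> Vr r" "PV.span G \<noteq> Vr r"
  shows "\<exists>\<phi>. Vector_Spaces.linear smult (*) \<phi> \<and> (\<forall>g\<in>G. \<phi> g = 0) \<and> (\<exists>m<r. \<phi> (monom 1 m) \<noteq> 0)"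
proof -
  have "\<exists>m<r. monom 1 m \<notin> PV.span G"
  proof (rule ccontr)
    assume "\<not> (\<exists>m<r. monom 1 m \<notin> PV.span G)"
    then have "monom 1 ` {..<r} \<subseteq> PV.span G" by auto
    then have "PV.span (monom 1 ` {..<r}) \<subseteq> PV.span G" by (intro PV.span_minimal) auto
    then show False using assms span_monoms by auto
  qed
  then obtain m where m: "m < r" "monom 1 m \<notin> PV.span G" by blast
  obtain B where B: "B \<subseteq> PV.span G" "PV.independent B" "PV.span G \<subseteq> PV.span B"
    by (rule PV.basis_exists[of "PV.span G"])
  have sB: "PV.span B \<subseteq> PV.span G" using B(1) by (intro PV.span_minimal) auto
  define x where "x = (monom 1 m :: bit poly)"
  have xB: "x \<notin> PV.span B" using sB m x_def by auto
  have ind: "PV.independent (insert x B)" by (rule PV.independent_insertI[OF xB B(2)])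
  define \<phi> where "\<phi> = PB.construct (insert x B) (\<lambda>b. if b = x then 1 else 0)"
  have lin: "Vector_Spaces.linear smult (*) \<phi>" unfolding \<phi>_def by (rule PB.linear_construct[OF ind])
  have phiB: "\<phi> b = 0" if "b \<in> B" for b
  proof -
    have "b \<noteq> x" using that xB PV.span_base by blast
    then show ?thesis unfolding \<phi>_def using that by (subst PB.construct_basis[OF ind]) auto
  qed
  have lin0: "Vector_Spaces.linear smult (*) (\<lambda>_::bit poly. 0::bit)"
    by (rule PB.linear_zero)
  have "\<phi> g = 0" if "g \<in> G" for g
  proof -
    have "g \<in> PV.span B" using that B(3) PV.span_base by blast
    then show ?thesis using PB.linear_eq_on[OF lin lin0, of g B] phiB by auto
  qed
  moreover have "\<phi> x = 1" unfolding \<phi>_def by (subst PB.construct_basis[OF ind]) auto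
  ultimately show ?thesis using lin m(1) x_def by auto
qed

definition dlt :: "(nat \<Rightarrow> bit) \<Rightarrow> nat \<Rightarrow> bit" where
  "dlt c = (\<lambda>i. c i + c (Suc i))"

lemma dlt_Suc: "(dlt ^^ Suc k) c i = (dlt ^^ k) c i + (dlt ^^ k) c (Suc i)"
  by (simp add: dlt_def)

lemma dlt_Suc': "(dlt ^^ Suc k) c = (dlt ^^ k) (dlt c)"
  by (simp add: funpow_Suc_right del: funpow.simps)

lemma bit_add_eq: "(a::bit) + b = c \<longleftrightarrow> b = a + c"
  by (cases a; cases b; cases c; simp)

lemma bit_add0: "(a::bit) + b = 0 \<longleftrightarrow> a = b"
  by (cases a; cases b; simp)

lemma bit_neq0: "(a::bit) \<noteq> 0 \<longleftrightarrow> a = 1"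
  by (cases a) auto

lemma dlt_agree:
  assumes "\<forall>i<n. c i = c' i" "i + k < n"
  shows "(dlt ^^ k) c i = (dlt ^^ k) c' i"
  using assms
proof (induction k arbitrary: c c' n)
  case 0 then show ?case by simp
next
  case (Suc k)
  have "\<forall>i<n - 1. dlt c i = dlt c' i" using Suc.prems(1) by (auto simp: dlt_def)
  then have "(dlt ^^ k) (dlt c) i = (dlt ^^ k) (dlt c') i"
    using Suc.IH[of "n - 1" "dlt c" "dlt c'"] Suc.prems(2) by auto
  then show ?case by (simp only: dlt_Suc')
qed

definition rowset :: "nat \<Rightarrow> (nat \<Rightarrow> bit) \<Rightarrow> nat \<Rightarrow> nat set" where
  "rowset n c k = {i. i + k < n \<and> (dlt ^^ k) c i \<noteq> 0}"

definition W :: "nat \<Rightarrow> (nat \<Rightarrow> bit) \<Rightarrow> nat" where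
  "W n c = (\<Sum>k<n. card (rowset n c k))"

lemma finite_rowset[simp]: "finite (rowset n c k)"
  by (rule finite_subset[of _ "{..<n}"]) (auto simp: rowset_def)

lemma rowset_big: "n \<le> k \<Longrightarrow> rowset n c k = {}"
  by (auto simp: rowset_def)

lemma W_Suc: "W (Suc n) c = card {i. i < Suc n \<and> c i \<noteq> 0} + W n (dlt c)"
proof -
  have "W (Suc n) c = card (rowset (Suc n) c 0) + (\<Sum>k<n. card (rowset (Suc n) c (Suc k)))"
    unfolding W_def by (rule sum.lessThan_Suc_shift)
  moreover have "rowset (Suc n) c (Suc k) = rowset n (dlt c) k" for k
    unfolding rowset_def by (simp only: dlt_Suc') auto
  moreover have "rowset (Suc n) c 0 = {i. i < Suc n \<and> c i \<noteq> 0}"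
    unfolding rowset_def by auto
  ultimately show ?thesis by (simp add: W_def)
qed

lemma const_run: "\<forall>i<n. c i = c (Suc i) \<Longrightarrow> i \<le> n \<Longrightarrow> c i = c 0"
  by (induction i) auto

lemma min_support: "\<exists>i<n. c i \<noteq> 0 \<Longrightarrow> n \<le> W n c"
proof (induction n arbitrary: c)
  case 0 then show ?case by simp
next
  case (Suc n)
  have fin: "finite {i. i < Suc n \<and> c i \<noteq> 0}" by auto
  show ?case
  proof (cases "\<exists>i<n. dlt c i \<noteq> 0")
    case True
    then have "n \<le> W n (dlt c)" by (rule Suc.IH)
    moreover from Suc.prems have "{i. i < Suc n \<and> c i \<noteq> 0} \<noteq> {}" by auto
    then have "1 \<le> card {i. i < Suc n \<and> c i \<noteq> 0}" using fin
      by (simp add: Suc_le_eq card_gt_0_iff)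
    ultimately show ?thesis by (simp add: W_Suc)
  next
    case False
    then have step: "\<forall>i<n. c i = c (Suc i)" by (auto simp: dlt_def bit_add0)
    from Suc.prems obtain i0 where i0: "i0 < Suc n" "c i0 \<noteq> 0" by auto
    have c0: "c 0 \<noteq> 0" using const_run[OF step, of i0] i0 by simp
    have "{i. i < Suc n \<and> c i \<noteq> 0} = {..<Suc n}"
    proof
      show "{..<Suc n} \<subseteq> {i. i < Suc n \<and> c i \<noteq> 0}"
      proof
        fix i assume "i \<in> {..<Suc n}"
        then have "c i = c 0" using const_run[OF step, of i] by simp
        then show "i \<in> {i. i < Suc n \<and> c i \<noteq> 0}" using c0 \<open>i \<in> {..<Suc n}\<close> by simp
      qed
    qed auto
    then show ?thesis by (simp add: W_Suc)
  qed
qed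

definition ind :: "nat set \<Rightarrow> nat \<Rightarrow> bit" where
  "ind A = (\<lambda>i. if i \<in> A then 1 else 0)"

lemma sum_pow_card:
  assumes "finite X"
  shows "(\<Sum>V\<in>Pow X. (t::real) ^ card V) = (1 + t) ^ card X"
proof -
  have "(\<Prod>x\<in>X. t + 1) = (\<Sum>V\<in>Pow X. (\<Prod>x\<in>V. t) * (\<Prod>x\<in>X - V. 1))"
    by (rule prod_add[OF assms])
  then show ?thesis by (simp add: add.commute)
qed

lemma bit_cancel: "(a::bit) + (a + b) = b"
  by (cases a; cases b; simp)

lemma bit_eqI: "((a::bit) \<noteq> 0 \<longleftrightarrow> b \<noteq> 0) \<Longrightarrow> a = b"
  by (cases a; cases b; simp)

lemma encode_inj:
  assumes A: "A \<subseteq> {..<r}" and A': "A' \<subseteq> {..<r}"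
    and h1: "\<forall>i. i + k < r \<longrightarrow> (dlt ^^ k) (ind A) i = (dlt ^^ k) (ind A') i"
    and h2: "\<forall>j<k. (dlt ^^ j) (ind A) 0 = (dlt ^^ j) (ind A') 0"
  shows "A = A'"
proof -
  have P: "\<forall>i. i + j < r \<longrightarrow> (dlt ^^ j) (ind A) i = (dlt ^^ j) (ind A') i" if "j \<le> k" for j
    using that
  proof (induction j rule: inc_induct)
    case base then show ?case using h1 by blast
  next
    case (step n)
    show ?case
    proof (intro allI)
      fix i show "i + n < r \<longrightarrow> (dlt ^^ n) (ind A) i = (dlt ^^ n) (ind A') i"
      proof (induction i)
        case 0 then show ?case using h2 step.hyps by auto
      next
        case (Suc i)
        show ?case
        proof
          assume lt: "Suc i + n < r"
          have e1: "(dlt ^^ n) (ind A) (Suc i) = (dlt ^^ n) (ind A) i + (dlt ^^ Suc n) (ind A) i"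
            by (simp only: dlt_Suc bit_cancel)
          have e2: "(dlt ^^ n) (ind A') (Suc i) = (dlt ^^ n) (ind A') i + (dlt ^^ Suc n) (ind A') i"
            by (simp only: dlt_Suc bit_cancel)
          have "(dlt ^^ n) (ind A) i = (dlt ^^ n) (ind A') i" using Suc.IH lt by simp
          moreover have "(dlt ^^ Suc n) (ind A) i = (dlt ^^ Suc n) (ind A') i"
            using step.IH lt by simp
          ultimately show "(dlt ^^ n) (ind A) (Suc i) = (dlt ^^ n) (ind A') (Suc i)"
            using e1 e2 by simp
        qed
      qed
    qed
  qed
  have "\<forall>i<r. ind A i = ind A' i" using P[of 0] by simp
  then show ?thesis using A A' unfolding ind_def
    by (metis (full_types) lessThan_iff one_neq_zero subsetD subset_antisym subsetI)
qed


lemma encode_sum: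
  assumes t: "0 \<le> (t::real)"
  shows "(\<Sum>A\<in>Pow {..<r}. t ^ card (rowset r (ind A) k)) \<le> 2 ^ k * (1 + t) ^ (r - k)"
proof -
  define E where "E A = ({i. i < r - k \<and> (dlt ^^ k) (ind A) i \<noteq> 0}, {j. j < k \<and> (dlt ^^ j) (ind A) 0 \<noteq> 0})" for A
  have rs: "rowset r (ind A) k = fst (E A)" for A
    unfolding rowset_def E_def by auto
  have inj: "inj_on E (Pow {..<r})"
  proof (rule inj_onI)
    fix A A' assume A: "A \<in> Pow {..<r}" and A': "A' \<in> Pow {..<r}" and e: "E A = E A'"
    have h1: "\<forall>i. i + k < r \<longrightarrow> (dlt ^^ k) (ind A) i = (dlt ^^ k) (ind A') i"
    proof (intro allI impI)
      fix i assume "i + k < r"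
      then have "i < r - k" by simp
      then show "(dlt ^^ k) (ind A) i = (dlt ^^ k) (ind A') i"
        using arg_cong[OF e, of fst] unfolding E_def by (intro bit_eqI) (auto simp: set_eq_iff)
    qed
    have h2: "\<forall>j<k. (dlt ^^ j) (ind A) 0 = (dlt ^^ j) (ind A') 0"
    proof (intro allI impI)
      fix j assume "j < k"
      then show "(dlt ^^ j) (ind A) 0 = (dlt ^^ j) (ind A') 0"
        using arg_cong[OF e, of snd] unfolding E_def by (intro bit_eqI) (auto simp: set_eq_iff)
    qed
    show "A = A'" using encode_inj[OF _ _ h1 h2] A A' by auto
  qed
  have sub: "E ` Pow {..<r} \<subseteq> Pow {..<r - k} \<times> Pow {..<k}"
    unfolding E_def by auto
  have "(\<Sum>A\<in>Pow {..<r}. t ^ card (rowset r (ind A) k)) = (\<Sum>e\<in>E ` Pow {..<r}. t ^ card (fst e))"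
    by (simp add: rs sum.reindex[OF inj])
  also have "\<dots> \<le> (\<Sum>e\<in>Pow {..<r - k} \<times> Pow {..<k}. t ^ card (fst e))"
    by (rule sum_mono2[OF _ sub]) (auto simp: t)
  also have "\<dots> = (\<Sum>(V, B)\<in>Pow {..<r - k} \<times> Pow {..<k}. t ^ card V)"
    by (simp only: case_prod_unfold)
  also have "\<dots> = (\<Sum>V\<in>Pow {..<r - k}. \<Sum>B\<in>Pow {..<k}. t ^ card V)"
    by (rule sum.cartesian_product[symmetric])
  also have "\<dots> = 2 ^ k * (\<Sum>V\<in>Pow {..<r - k}. t ^ card V)"
    by (simp add: card_Pow sum_distrib_left)
  also have "\<dots> = 2 ^ k * (1 + t) ^ (r - k)"
    by (simp add: sum_pow_card)
  finally show ?thesis .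
qed

lemma qW:
  fixes s :: real
  assumes s: "0 \<le> s" "s \<le> 1" and K0: "0 < K0" and c: "\<exists>i<r. c i \<noteq> 0"
  shows "(s ^ 2) ^ W r c \<le> s ^ r * (\<Sum>k<K0. (s ^ K0) ^ card (rowset r c k))"
proof -
  define u where "u k = card (rowset r c k)" for k
  define m where "m = Min (u ` {..<K0})"
  have fin: "finite (u ` {..<K0})" by (rule finite_imageI) (rule finite_lessThan)
  have "0 \<in> {..<K0}" using K0 by simp
  then have ne: "u ` {..<K0} \<noteq> {}" by blast
  have "m \<in> u ` {..<K0}" unfolding m_def by (rule Min_in[OF fin ne])
  then obtain k0 where k0: "k0 \<in> {..<K0}" "m = u k0" by (rule imageE)
  have mk: "u k0 \<le> u k" if "k < K0" for k
  proof -
    have "u k \<in> u ` {..<K0}" using that by simp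
    then have "m \<le> u k" unfolding m_def by (rule Min_le[OF fin])
    then show ?thesis using k0(2) by simp
  qed
  have "K0 * u k0 \<le> (\<Sum>k<K0. u k)"
    using sum_bounded_below[of "{..<K0}" "u k0" u] mk by simp
  also have "\<dots> \<le> (\<Sum>k<K0 + r. u k)" by (rule sum_mono2) auto
  also have "\<dots> = (\<Sum>k<r. u k)"
    by (rule sum.mono_neutral_right) (auto simp: u_def rowset_big)
  also have "\<dots> = W r c" by (simp add: W_def u_def)
  finally have h1: "K0 * u k0 \<le> W r c" .
  have h2: "r \<le> W r c" by (rule min_support[OF c])
  have "(s ^ 2) ^ W r c = s ^ W r c * s ^ W r c" by (simp only: power2_eq_square power_mult_distrib)
  also have "\<dots> \<le> s ^ r * s ^ (K0 * u k0)"
    by (intro mult_mono power_decreasing h1 h2 s zero_le_power)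
  also have "\<dots> = s ^ r * (s ^ K0) ^ u k0" by (simp add: power_mult)
  also have "\<dots> \<le> s ^ r * (\<Sum>k<K0. (s ^ K0) ^ u k)"
    by (intro mult_left_mono member_le_sum) (use k0 s in auto)
  finally show ?thesis by (simp add: u_def)
qed

lemma total_sum:
  fixes s :: real
  assumes s: "0 \<le> s" "s \<le> 1" and K0: "0 < K0"
  shows "(\<Sum>A\<in>Pow {..<r} - {{}}. (s ^ 2) ^ W r (ind A)) \<le> real K0 * 2 ^ K0 * s ^ r * (1 + s ^ K0) ^ r"
proof -
  define t where "t = s ^ K0"
  have t: "0 \<le> t" "t \<le> 1" using s by (auto simp: t_def power_le_one)
  have "(\<Sum>A\<in>Pow {..<r} - {{}}. (s ^ 2) ^ W r (ind A)) \<le> (\<Sum>A\<in>Pow {..<r} - {{}}. s ^ r * (\<Sum>k<K0. t ^ card (rowset r (ind A) k)))"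
  proof (rule sum_mono)
    fix A assume "A \<in> Pow {..<r} - {{}}"
    then obtain i where "i \<in> A" "i < r" by auto
    then have "\<exists>i<r. ind A i \<noteq> 0" by (auto simp: ind_def)
    then show "(s ^ 2) ^ W r (ind A) \<le> s ^ r * (\<Sum>k<K0. t ^ card (rowset r (ind A) k))"
      unfolding t_def by (rule qW[OF s K0])
  qed
  also have "\<dots> \<le> (\<Sum>A\<in>Pow {..<r}. s ^ r * (\<Sum>k<K0. t ^ card (rowset r (ind A) k)))"
    by (rule sum_mono2) (auto intro!: sum_nonneg mult_nonneg_nonneg simp: s t)
  also have "\<dots> = s ^ r * (\<Sum>k<K0. \<Sum>A\<in>Pow {..<r}. t ^ card (rowset r (ind A) k))"
    by (simp add: sum_distrib_left[symmetric] sum.swap[of _ "Pow {..<r}"])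
  also have "\<dots> \<le> s ^ r * (\<Sum>k<K0. 2 ^ K0 * (1 + t) ^ r)"
  proof (intro mult_left_mono sum_mono)
    fix k assume k: "k \<in> {..<K0}"
    have "(\<Sum>A\<in>Pow {..<r}. t ^ card (rowset r (ind A) k)) \<le> 2 ^ k * (1 + t) ^ (r - k)"
      by (rule encode_sum[OF t(1)])
    also have "\<dots> \<le> 2 ^ K0 * (1 + t) ^ r"
      using k t by (intro mult_mono power_increasing) auto
    finally show "(\<Sum>A\<in>Pow {..<r}. t ^ card (rowset r (ind A) k)) \<le> 2 ^ K0 * (1 + t) ^ r" .
  qed (simp add: s)
  also have "\<dots> = real K0 * 2 ^ K0 * s ^ r * (1 + s ^ K0) ^ r" by (simp add: t_def)
  finally show ?thesis .
qed


lemma finite_siteB[simp]: "finite (siteB r)"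
  by (rule finite_subset[of _ "{..r} \<times> {..r}"]) (auto simp: siteB_def)

lemma prob_avoid:
  assumes X: "X \<subseteq> siteB r"
  shows "probB p r (\<lambda>S. S \<inter> X = {}) = (1 - p) ^ card X"
proof -
  define Bs where "Bs = siteB r"
  have fin: "finite Bs" by (simp add: Bs_def)
  define f1 where "f1 x = (if x \<in> X then 0 else p)" for x :: "nat \<times> nat"
  have "(\<Prod>x\<in>Bs. f1 x + (1 - p)) = (\<Sum>S\<in>Pow Bs. (\<Prod>x\<in>S. f1 x) * (\<Prod>x\<in>Bs - S. 1 - p))"
    by (rule prod_add[OF fin])
  also have "\<dots> = (\<Sum>S\<in>Pow Bs. if S \<inter> X = {} then p ^ card S * (1 - p) ^ (card Bs - card S) else 0)"
  proof (rule sum.cong[OF refl])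
    fix S assume S: "S \<in> Pow Bs"
    then have Sf: "finite S" using fin finite_subset by blast
    have c: "card (Bs - S) = card Bs - card S" using S Sf by (simp add: card_Diff_subset)
    show "(\<Prod>x\<in>S. f1 x) * (\<Prod>x\<in>Bs - S. 1 - p) = (if S \<inter> X = {} then p ^ card S * (1 - p) ^ (card Bs - card S) else 0)"
    proof (cases "S \<inter> X = {}")
      case True
      then have "(\<Prod>x\<in>S. f1 x) = (\<Prod>x\<in>S. p)" by (intro prod.cong) (auto simp: f1_def)
      then show ?thesis using True c by simp
    next
      case False
      then obtain x where "x \<in> S" "x \<in> X" by auto
      then have "(\<Prod>x\<in>S. f1 x) = 0" using Sf by (intro prod_zero) (auto simp: f1_def)
      then show ?thesis using False by simp
    qed
  qed
  also have "\<dots> = probB p r (\<lambda>S. S \<inter> X = {})" unfolding probB_def Bs_def by (rule refl)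
  finally have e: "(\<Prod>x\<in>Bs. f1 x + (1 - p)) = probB p r (\<lambda>S. S \<inter> X = {})" .
  have "(\<Prod>x\<in>Bs. f1 x + (1 - p)) = (\<Prod>x\<in>Bs. if x \<in> X then 1 - p else 1)"
    by (intro prod.cong) (auto simp: f1_def)
  also have "\<dots> = (\<Prod>x\<in>Bs \<inter> X. 1 - p)"
    using fin by (simp add: prod.If_cases)
  also have "Bs \<inter> X = X" using X by (auto simp: Bs_def)
  finally show ?thesis using e by simp
qed

lemma prob_total: "probB p r (\<lambda>S. True) = 1"
  using prob_avoid[of "{}" r p] by simp

lemma prob_compl: "1 - probB p r E = probB p r (\<lambda>S. \<not> E S)"
proof -
  have "probB p r E + probB p r (\<lambda>S. \<not> E S) = probB p r (\<lambda>S. True)"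
    unfolding probB_def by (subst sum.distrib[symmetric]) (rule sum.cong, auto)
  then show ?thesis using prob_total[of p r] by simp
qed

lemma prob_union:
  assumes I: "finite I" and p: "0 \<le> p" "p \<le> 1"
    and EF: "\<And>S. S \<subseteq> siteB r \<Longrightarrow> E S \<Longrightarrow> \<exists>a\<in>I. F a S"
  shows "probB p r E \<le> (\<Sum>a\<in>I. probB p r (F a))"
proof -
  define w where "w S = p ^ card S * (1 - p) ^ (card (siteB r) - card S)" for S :: "(nat \<times> nat) set"
  have w0: "0 \<le> w S" for S using p by (simp add: w_def)
  have "probB p r E = (\<Sum>S\<in>Pow (siteB r). if E S then w S else 0)"
    unfolding probB_def w_def by (rule refl)
  also have "\<dots> \<le> (\<Sum>S\<in>Pow (siteB r). \<Sum>a\<in>I. if F a S then w S else 0)"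
  proof (rule sum_mono)
    fix S assume S: "S \<in> Pow (siteB r)"
    show "(if E S then w S else 0) \<le> (\<Sum>a\<in>I. if F a S then w S else 0)"
    proof (cases "E S")
      case True
      then obtain a where a: "a \<in> I" "F a S" using EF S by blast
      have "w S = (if F a S then w S else 0)" using a by simp
      also have "\<dots> \<le> (\<Sum>a\<in>I. if F a S then w S else 0)"
        by (rule member_le_sum[OF a(1) _ I]) (simp add: w0)
      finally show ?thesis using True by simp
    next
      case False
      then show ?thesis by (simp add: sum_nonneg w0)
    qed
  qed
  also have "\<dots> = (\<Sum>a\<in>I. \<Sum>S\<in>Pow (siteB r). if F a S then w S else 0)"
    by (rule sum.swap)
  also have "\<dots> = (\<Sum>a\<in>I. probB p r (F a))"
    unfolding probB_def w_def by (rule refl)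
  finally show ?thesis .
qed


definition suppB :: "nat \<Rightarrow> (nat \<Rightarrow> bit) \<Rightarrow> (nat \<times> nat) set" where
  "suppB r c = {(i, j). (i, j) \<in> siteB r \<and> (dlt ^^ (r - 1 - j)) c i \<noteq> 0}"

lemma fpoly_mult: "monom 1 i * fpoly = monom 1 i + monom (1::bit) (Suc i)"
proof -
  have e: "fpoly = 1 + monom 1 1"
    by (simp add: fpoly_def poly_eq_iff coeff_pCons split: nat.split)
  have "monom 1 i * (1 + monom 1 1) = monom 1 i + monom (1::bit) (Suc i)"
    by (simp add: distrib_left mult_monom)
  then show ?thesis unfolding e .
qed

lemma phi_pat:
  assumes lin: "Vector_Spaces.linear smult (*) \<phi>"
  shows "\<phi> (monom 1 i * fpoly ^ k) = (dlt ^^ k) (\<lambda>i. \<phi> (monom 1 i)) i"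
proof (induction k arbitrary: i)
  case 0 then show ?case by simp
next
  case (Suc k)
  interpret L: Vector_Spaces.linear smult "(*)" \<phi> by (rule lin)
  have "monom 1 i * fpoly ^ Suc k = (monom 1 i * fpoly) * fpoly ^ k"
    by (simp add: mult.assoc)
  also have "\<dots> = monom 1 i * fpoly ^ k + monom 1 (Suc i) * fpoly ^ k"
    by (simp add: fpoly_mult distrib_right)
  finally have "\<phi> (monom 1 i * fpoly ^ Suc k) = \<phi> (monom 1 i * fpoly ^ k) + \<phi> (monom 1 (Suc i) * fpoly ^ k)"
    by (simp add: L.add)
  then show ?case using Suc.IH by (simp only: dlt_Suc)
qed

lemma gen_Vr:
  assumes "(i, j) \<in> siteB r" "1 \<le> r"
  shows "monom 1 i * fpoly ^ (r - 1 - j) \<in> Vr r"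
proof -
  have df: "degree fpoly = 1" by (simp add: fpoly_def)
  have "degree (monom (1::bit) i * fpoly ^ (r - 1 - j)) \<le> degree (monom (1::bit) i) + degree (fpoly ^ (r - 1 - j))"
    by (rule degree_mult_le)
  also have "\<dots> \<le> i + (r - 1 - j)"
    by (intro add_mono degree_monom_le) (metis degree_power_le df mult_1)
  finally have d: "degree (monom (1::bit) i * fpoly ^ (r - 1 - j)) < r"
    using assms by (auto simp: siteB_def)
  show ?thesis unfolding Vr_def using d by (auto intro: coeff_eq_0)
qed

lemma Fspace_sub: "1 \<le> r \<Longrightarrow> S \<subseteq> siteB r \<Longrightarrow> Fspace r S \<subseteq> Vr r"
  unfolding Fspace_def using gen_Vr subspace_Vr
  by (intro PV.span_minimal) auto

lemma fail_witness:
  assumes r: "1 \<le> r" and S: "S \<subseteq> siteB r" and d: "dr r S \<noteq> r"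
  shows "\<exists>A\<in>Pow {..<r} - {{}}. S \<inter> suppB r (ind A) = {}"
proof -
  define G where "G = (\<lambda>(i, j). monom 1 i * fpoly ^ (r - 1 - j)) ` S"
  have FG: "Fspace r S = PV.span G" unfolding Fspace_def G_def by simp
  have sub: "PV.span G \<subseteq> Vr r" using Fspace_sub[OF r S] FG by simp
  have ne: "PV.span G \<noteq> Vr r"
  proof
    assume "PV.span G = Vr r"
    then have "dr r S = r" unfolding dr_def FG using dim_Vr by simp
    then show False using d by simp
  qed
  obtain \<phi> where lin: "Vector_Spaces.linear smult (*) \<phi>" and z: "\<forall>g\<in>G. \<phi> g = 0"
    and m: "\<exists>m<r. \<phi> (monom 1 m) \<noteq> 0"
    using dual[OF sub ne] by blast
  define c where "c = (\<lambda>i. \<phi> (monom 1 i))"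
  define A where "A = {i. i < r \<and> c i \<noteq> 0}"
  have A: "A \<in> Pow {..<r} - {{}}" using m by (auto simp: A_def c_def)
  have agree: "\<forall>i<r. ind A i = c i" by (auto simp: ind_def A_def bit_neq0)
  have "S \<inter> suppB r (ind A) = {}"
  proof (rule ccontr)
    assume "S \<inter> suppB r (ind A) \<noteq> {}"
    then obtain i j where ij: "(i, j) \<in> S" "(dlt ^^ (r - 1 - j)) (ind A) i \<noteq> 0"
      by (auto simp: suppB_def)
    have lt: "i + (r - 1 - j) < r" using ij(1) S r by (auto simp: siteB_def)
    have "(dlt ^^ (r - 1 - j)) (ind A) i = (dlt ^^ (r - 1 - j)) c i"
      by (rule dlt_agree[OF agree lt])
    also have "\<dots> = \<phi> (monom 1 i * fpoly ^ (r - 1 - j))"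
      unfolding c_def by (rule phi_pat[OF lin, symmetric])
    also have "\<dots> = 0" using z ij(1) by (auto simp: G_def)
    finally show False using ij(2) by simp
  qed
  then show ?thesis using A by blast
qed

lemma card_suppB:
  assumes r: "1 \<le> r"
  shows "card (suppB r c) = W r c"
proof -
  define T where "T = (SIGMA k:{..<r}. rowset r c k)"
  have cT: "card T = W r c" unfolding T_def W_def by (simp add: card_SigmaI)
  define g where "g = (\<lambda>(k::nat, i::nat). (i, r - 1 - k))"
  have inj: "inj_on g T" unfolding g_def T_def by (auto simp: inj_on_def)
  have img: "g ` T = suppB r c"
  proof
    show "g ` T \<subseteq> suppB r c"
      unfolding g_def T_def suppB_def rowset_def siteB_def using r by auto
    show "suppB r c \<subseteq> g ` T"
    proof
      fix x assume x: "x \<in> suppB r c"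
      then obtain i j where ij: "x = (i, j)" "i \<le> j" "j \<le> r - 1" "(dlt ^^ (r - 1 - j)) c i \<noteq> 0"
        by (auto simp: suppB_def siteB_def)
      have "(r - 1 - j, i) \<in> T" using ij r by (auto simp: T_def rowset_def)
      moreover have "g (r - 1 - j, i) = x" using ij r by (auto simp: g_def)
      ultimately show "x \<in> g ` T" by force
    qed
  qed
  show ?thesis using card_image[OF inj] img cT by simp
qed


lemma fail_bound:
  fixes p s :: real
  assumes p: "0 < p" "p < 1" and s: "s = sqrt (1 - p)" and K0: "0 < K0" and r: "1 \<le> r"
  shows "1 - probB p r (\<lambda>S. dr r S = r) \<le> real K0 * 2 ^ K0 * (s * (1 + s ^ K0)) ^ r"
proof -
  define I where "I = Pow {..<r} - {{}}"
  have s0: "0 \<le> s" "s \<le> 1" using s p by auto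
  have s2: "s ^ 2 = 1 - p" using s p by simp
  have "1 - probB p r (\<lambda>S. dr r S = r) = probB p r (\<lambda>S. \<not> dr r S = r)"
    by (rule prob_compl)
  also have "\<dots> \<le> (\<Sum>A\<in>I. probB p r (\<lambda>S. S \<inter> suppB r (ind A) = {}))"
    by (rule prob_union) (use p fail_witness[OF r] in \<open>auto simp: I_def\<close>)
  also have "\<dots> = (\<Sum>A\<in>I. (s ^ 2) ^ W r (ind A))"
  proof (rule sum.cong[OF refl])
    fix A assume "A \<in> I"
    have "suppB r (ind A) \<subseteq> siteB r" by (auto simp: suppB_def)
    then have "probB p r (\<lambda>S. S \<inter> suppB r (ind A) = {}) = (1 - p) ^ card (suppB r (ind A))"
      by (rule prob_avoid)
    then show "probB p r (\<lambda>S. S \<inter> suppB r (ind A) = {}) = (s ^ 2) ^ W r (ind A)"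
      using card_suppB[OF r] s2 by simp
  qed
  also have "\<dots> \<le> real K0 * 2 ^ K0 * s ^ r * (1 + s ^ K0) ^ r"
    unfolding I_def by (rule total_sum[OF s0 K0])
  also have "\<dots> = real K0 * 2 ^ K0 * (s * (1 + s ^ K0)) ^ r"
    by (simp add: power_mult_distrib)
  finally show ?thesis .
qed

lemma pow_exp_bound:
  fixes \<rho> x :: real
  assumes "0 < \<rho>" "\<rho> < 1" "x \<le> real r"
  shows "\<rho> ^ r \<le> exp (x * ln \<rho>)"
proof -
  have "\<rho> ^ r = exp (real r * ln \<rho>)"
    using assms by (simp add: exp_of_nat_mult)
  also have "\<dots> \<le> exp (x * ln \<rho>)"
  proof -
    have "real r * ln \<rho> \<le> x * ln \<rho>" using assms by (intro mult_right_mono_neg) auto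
    then show ?thesis by simp
  qed
  finally show ?thesis .
qed

theorem lemma3:
  shows "\<forall>p::real. 0 < p \<and> p < 1 \<longrightarrow> (\<forall>\<kappa>::real. \<kappa> > 0 \<longrightarrow>
     (\<exists>c::real > 0. \<exists>C::real > 0. \<forall>L::nat. L \<ge> 2 \<longrightarrow>
        (let r = nat \<lceil>c / p ^ 3 * ln (real L)\<rceil> in
           1 - probB p r (\<lambda>S. dr r S = r) \<le> C * real L powr (- \<kappa>))))"
proof (intro allI impI)
  fix p \<kappa> :: real
  assume p: "0 < p \<and> p < 1" and \<kappa>: "\<kappa> > 0"
  define s where "s = sqrt (1 - p)"
  have s: "0 < s" "s < 1" using p by (auto simp: s_def)
  have "(1 - s) / 2 > 0" using s by simp
  then obtain K0 where K0: "s ^ K0 < (1 - s) / 2" using real_arch_pow_inv[OF _ s(2)] by blast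
  have K0pos: "0 < K0"
  proof (rule ccontr)
    assume "\<not> 0 < K0" then have "K0 = 0" by simp
    then show False using K0 s by simp
  qed
  define \<rho> where "\<rho> = s * (1 + s ^ K0)"
  have \<rho>0: "0 < \<rho>" using s by (simp add: \<rho>_def add_pos_nonneg)
  have "\<rho> \<le> s * (1 + (1 - s) / 2)" unfolding \<rho>_def using K0 s by (intro mult_left_mono) auto
  also have "\<dots> < 1"
  proof -
    have "0 < (1 - s) * (2 - s)" using s by simp
    then show ?thesis by (simp add: algebra_simps field_simps)
  qed
  finally have \<rho>1: "\<rho> < 1" .
  have l\<rho>: "ln \<rho> < 0" using \<rho>0 \<rho>1 by simp
  define K where "K = real K0 * 2 ^ K0"
  have Kpos: "0 < K" using K0pos by (simp add: K_def)
  define c where "c = \<kappa> * p ^ 3 / (- ln \<rho>)"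
  have cpos: "0 < c" using \<kappa> p l\<rho> by (simp add: c_def divide_pos_neg)
  have main: "\<forall>L::nat. L \<ge> 2 \<longrightarrow>
        (let r = nat \<lceil>c / p ^ 3 * ln (real L)\<rceil> in
           1 - probB p r (\<lambda>S. dr r S = r) \<le> K * real L powr (- \<kappa>))"
  proof (intro allI impI)
    fix L :: nat assume L: "2 \<le> L"
    define x where "x = c / p ^ 3 * ln (real L)"
    define r where "r = nat \<lceil>x\<rceil>"
    have lnL: "0 < ln (real L)" using L by simp
    have xpos: "0 < x" unfolding x_def using cpos p lnL by simp
    have xr: "x \<le> real r" unfolding r_def using xpos by linarith
    have r1: "1 \<le> r" unfolding r_def using xpos by linarith
    have xe: "x * ln \<rho> = - \<kappa> * ln (real L)"
      unfolding x_def c_def using p l\<rho> by (simp add: field_simps)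
    have "1 - probB p r (\<lambda>S. dr r S = r) \<le> K * \<rho> ^ r"
      using fail_bound[OF _ _ s_def K0pos r1] p by (simp add: K_def \<rho>_def)
    also have "\<dots> \<le> K * exp (x * ln \<rho>)"
      using Kpos by (intro mult_left_mono pow_exp_bound[OF \<rho>0 \<rho>1 xr]) auto
    also have "\<dots> = K * real L powr (- \<kappa>)"
      using L by (simp add: xe powr_def)
    finally show "let r = nat \<lceil>c / p ^ 3 * ln (real L)\<rceil> in
           1 - probB p r (\<lambda>S. dr r S = r) \<le> K * real L powr (- \<kappa>)"
      by (simp add: r_def x_def Let_def)
  qed
  show "\<exists>c::real > 0. \<exists>C::real > 0. \<forall>L::nat. L \<ge> 2 \<longrightarrow>
        (let r = nat \<lceil>c / p ^ 3 * ln (real L)\<rceil> in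
           1 - probB p r (\<lambda>S. dr r S = r) \<le> C * real L powr (- \<kappa>))"
    using cpos Kpos main by blast
qed

end
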